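(* For $q>0$, $$\tilde\psi(q)=-\frac1q+\tilde\gamma_0+\sum_{k=1}^\infty(-1)^k\left(\frac1k-\frac1{k+q}\right),$$ and the function $$\tilde\Gamma(q)=\frac1q\, e^{\tilde\gamma_0 q}\prod_{k=1}^\infty\left(e^{-\frac qk}\left(1+\frac qk\right)\right)^{(-1)^{k+1}}\qquad(q>0)$$ satisfies the differential equation $\tilde\psi(q)=\frac{d}{dq}\log\tilde\Gamma(q)$.
   Context: For $q>0$, $\zeta_E(z,q)=\sum_{n=0}^\infty (-1)^n (n+q)^{-z}$ for $\mathrm{Re}(z)>0$, extended by analytic continuation to an entire function of $z$. The modified Stieltjes constants $\tilde\gamma_k(q)$ are defined by the Taylor expansion $\zeta_E(z,q)=\sum_{k=0}^\infty\frac{(-1)^k\tilde\gamma_k(q)}{k!}(z-1)^k$; $\tilde\gamma_0:=\tilde\gamma_0(1)=\zeta_E(1,1)$ (the modified Euler constant). The modified digamma function is $\tilde\psi(q):=-\tilde\gamma_0(q)=-\zeta_E(1,q)=-\sum_{n\ge0}\frac{(-1)^n}{n+q}$. The modified gamma function $\tilde\Gamma$ is defined (up to the normalization given by the product) by the differential equation $\frac{d}{dq}\log\tilde\Gamma(q)=\tilde\psi(q)$. *)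

theory Defs
  imports "HOL-Analysis.Analysis"
begin

text \<open>Alternating Hurwitz zeta function, defined by its series for real z > 0, q > 0
  (this is the region where the series converges; at z = 1 this agrees with the
  analytic continuation).\<close>
definition zeta_E :: "real \<Rightarrow> real \<Rightarrow> real" where
  "zeta_E z q = (\<Sum>n. (-1) ^ n / (real n + q) powr z)"

definition gamma0_tilde :: real where
  "gamma0_tilde = zeta_E 1 1"

definition psi_tilde :: "real \<Rightarrow> real" where
  "psi_tilde q = - zeta_E 1 q"

definition Gamma_tilde_factor :: "real \<Rightarrow> nat \<Rightarrow> real" where
  "Gamma_tilde_factor q k =
     (exp (- q / real k) * (1 + q / real k)) powi ((-1) ^ (k + 1))"

definition Gamma_tilde :: "real \<Rightarrow> real" where
  "Gamma_tilde q = (1 / q) * exp (gamma0_tilde * q) *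
     (\<Prod>n. Gamma_tilde_factor q (n + 1))"

end

theory Submission
  imports Defs "HOL-Real_Asymp.Real_Asymp"
begin

lemma zetaE1: "q > 0 \<Longrightarrow> zeta_E 1 q = (\<Sum>n. (-1) ^ n / (real n + q))"
  unfolding zeta_E_def by (simp add: add_nonneg_pos)

lemma alt_summable:
  assumes "q > 0"
  shows "summable (\<lambda>n. (-1) ^ n / (real n + q))"
proof -
  have "summable (\<lambda>n. (-1) ^ n * (1 / (real n + q)))"
  proof (rule summable_Leibniz')
    show "(\<lambda>n. 1 / (real n + q)) \<longlonglongrightarrow> 0"
      using assms by real_asymp
  qed (use assms in \<open>auto simp: frac_le\<close>)
  then show ?thesis by simp
qed

lemma inv_sq_summable: "summable (\<lambda>n. 1 / (real (Suc n))^2)"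
  using inverse_power_summable[of 2] by (subst summable_Suc_iff) (simp add: inverse_eq_divide)

lemma part1:
  assumes q: "q > 0"
  shows "(\<lambda>n. (-1) ^ (n + 1) * (1 / real (n + 1) - 1 / (real (n + 1) + q)))
           sums (psi_tilde q + 1 / q - gamma0_tilde)"
proof -
  have s1: "(\<lambda>n. (-1) ^ n / (real n + 1)) sums gamma0_tilde"
    using alt_summable[of 1] zetaE1[of 1] unfolding gamma0_tilde_def
    by (simp add: summable_sums)
  have s2: "(\<lambda>n. (-1) ^ n / (real n + q)) sums zeta_E 1 q"
    using alt_summable[OF q] zetaE1[OF q] by (simp add: summable_sums)
  have s2': "(\<lambda>n. (-1) ^ Suc n / (real (Suc n) + q)) sums (zeta_E 1 q - 1 / q)"
    using s2 sums_Suc_iff[of "\<lambda>n. (-1) ^ n / (real n + q)" "zeta_E 1 q - 1/q"] by simp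
  have "(\<lambda>n. (- ((-1) ^ n / (real n + 1))) - (-1) ^ Suc n / (real (Suc n) + q))
      sums (- gamma0_tilde - (zeta_E 1 q - 1 / q))"
    by (intro sums_diff sums_minus s1 s2')
  then show ?thesis
    by (simp add: psi_tilde_def algebra_simps)
qed

definition ff :: "nat \<Rightarrow> real \<Rightarrow> real" where
  "ff n x = (-1) ^ n * (ln (1 + x / real (Suc n)) - x / real (Suc n))"

definition ff' :: "nat \<Rightarrow> real \<Rightarrow> real" where
  "ff' n x = (-1) ^ (n + 1) * (1 / real (n + 1) - 1 / (real (n + 1) + x))"

lemma factor_exp:
  assumes "x > 0"
  shows "Gamma_tilde_factor x (n + 1) = exp (ff n x)"
proof -
  define k where "k = real (Suc n)"
  have k: "k > 0" by (simp add: k_def)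
  have b: "exp (- x / k) * (1 + x / k) = exp (ln (1 + x / k) - x / k)"
  proof -
    have "1 + x / k > 0" using k assms by (simp add: add_pos_pos)
    then have "exp (ln (1 + x / k) - x / k) = (1 + x / k) / exp (x / k)"
      by (simp add: exp_diff)
    then show ?thesis by (simp add: exp_minus field_simps)
  qed
  have G: "Gamma_tilde_factor x (n+1) = (exp (- x / k) * (1 + x / k)) powi ((-1)^(n+1+1))"
    by (simp add: Gamma_tilde_factor_def k_def)
  have F: "ff n x = (-1)^n * (ln (1 + x / k) - x / k)"
    by (simp add: ff_def k_def)
  show ?thesis
  proof (cases "even n")
    case True
    then have "(-1::int) ^ (n + 1 + 1) = 1" by simp
    moreover have "(-1::real) ^ n = 1" using True by simp
    ultimately show ?thesis unfolding G F b by simp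
  next
    case False
    then have "(-1::int) ^ (n + 1 + 1) = -1" by simp
    moreover have "(-1::real) ^ n = -1" using False by simp
    ultimately show ?thesis unfolding G F b by (simp add: power_int_minus exp_minus[symmetric])
  qed
qed

lemma ln_bound:
  assumes "t \<ge> (0::real)"
  shows "\<bar>ln (1 + t) - t\<bar> \<le> t^2"
proof -
  have "ln (1 + t) \<le> t" using assms by (rule ln_add_one_self_le_self)
  moreover have "ln (1 / (1 + t)) \<le> 1 / (1 + t) - 1"
    using assms by (intro ln_le_minus_one) simp
  then have "- ln (1 + t) \<le> - t / (1 + t)"
    using assms by (simp add: ln_div field_simps)
  moreover have "t - t / (1 + t) \<le> t^2"
    using assms by (simp add: field_simps power2_eq_square)
  ultimately show ?thesis by linarith
qed

lemma ff_summable: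
  assumes "x > 0"
  shows "summable (\<lambda>n. ff n x)"
proof (rule summable_comparison_test')
  show "summable (\<lambda>n. x^2 * (1 / (real (Suc n))^2))"
    by (intro summable_mult inv_sq_summable)
  fix n
  have "norm (ff n x) = \<bar>ln (1 + x / real (Suc n)) - x / real (Suc n)\<bar>"
    by (simp add: ff_def abs_mult)
  also have "\<dots> \<le> (x / real (Suc n))^2"
    using assms by (intro ln_bound) simp
  finally show "norm (ff n x) \<le> x^2 * (1 / (real (Suc n))^2)"
    by (simp add: power_divide)
qed

lemma ln_Gamma:
  assumes "x > 0"
  shows "convergent_prod (\<lambda>n. Gamma_tilde_factor x (n + 1))"
    and "ln (Gamma_tilde x) = - ln x + gamma0_tilde * x + (\<Sum>n. ff n x)"
proof -
  have eq: "(\<lambda>n. Gamma_tilde_factor x (n + 1)) = (\<lambda>n. exp (ff n x))"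
    using factor_exp[OF assms] by auto
  show "convergent_prod (\<lambda>n. Gamma_tilde_factor x (n + 1))"
    unfolding eq by (intro convergent_prod_exp ff_summable assms)
  have "Gamma_tilde x = (1 / x) * exp (gamma0_tilde * x) * exp (\<Sum>n. ff n x)"
    unfolding Gamma_tilde_def eq prodinf_exp[OF ff_summable[OF assms]] ..
  then show "ln (Gamma_tilde x) = - ln x + gamma0_tilde * x + (\<Sum>n. ff n x)"
    using assms by (simp add: ln_mult ln_div)
qed

lemma ff_deriv:
  assumes "x > 0"
  shows "(ff n has_field_derivative ff' n x) (at x within S)"
proof -
  define k where "k = real (Suc n)"
  have k: "k > 0" by (simp add: k_def)
  have "((\<lambda>x. (-1) ^ n * (ln (1 + x / k) - x / k)) has_field_derivative
        (-1) ^ n * ((1 / k) / (1 + x / k) - 1 / k)) (at x within S)"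
    using k assms by (auto intro!: derivative_eq_intros simp: add_pos_pos)
  moreover have "(-1) ^ n * ((1 / k) / (1 + x / k) - 1 / k) = ff' n x"
  proof -
    have "k + x > 0" using k assms by simp
    then have e1: "(1 / k) / (1 + x / k) = 1 / (k + x)"
      using k by (simp add: divide_simps)
    have e2: "ff' n x = (-1) ^ (n + 1) * (1 / k - 1 / (k + x))"
      by (simp add: ff'_def k_def)
    show ?thesis unfolding e1 e2 by (simp add: algebra_simps)
  qed
  ultimately show ?thesis unfolding ff_def k_def by (simp add: fun_eq_iff)
qed

theorem theorem3p12:
  fixes q :: real
  assumes "q > 0"
  shows "(\<lambda>n. (-1) ^ (n + 1) * (1 / real (n + 1) - 1 / (real (n + 1) + q)))
           sums (psi_tilde q + 1 / q - gamma0_tilde) \<and>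
         convergent_prod (\<lambda>n. Gamma_tilde_factor q (n + 1)) \<and>
         ((\<lambda>x. ln (Gamma_tilde x)) has_real_derivative psi_tilde q) (at q)"
proof (intro conjI)
  note q = assms
  show P1: "(\<lambda>n. (-1) ^ (n + 1) * (1 / real (n + 1) - 1 / (real (n + 1) + q)))
           sums (psi_tilde q + 1 / q - gamma0_tilde)" by (rule part1[OF q])
  show "convergent_prod (\<lambda>n. Gamma_tilde_factor q (n + 1))" by (rule ln_Gamma(1)[OF q])
  define S where "S = {q/2..2*q}"
  have Spos: "x \<in> S \<Longrightarrow> x > 0" for x using q by (auto simp: S_def)
  have qS: "q \<in> interior S" using q by (simp add: S_def)
  have unif: "uniformly_convergent_on S (\<lambda>n x. \<Sum>i<n. ff' i x)"
    unfolding uniformly_convergent_on_def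
  proof (rule exI, rule Weierstrass_m_test_ev)
    show "summable (\<lambda>n. (2*q) * (1 / (real (Suc n))^2))"
      by (intro summable_mult inv_sq_summable)
    show "\<forall>\<^sub>F n in sequentially. \<forall>x\<in>S. norm (ff' n x) \<le> (2*q) * (1 / (real (Suc n))^2)"
    proof (intro always_eventually allI ballI)
      fix n x assume x: "x \<in> S"
      define k where "k = real (Suc n)"
      have k: "k \<ge> 1" by (simp add: k_def)
      have x0: "x > 0" "x \<le> 2*q" using x q by (auto simp: S_def)
      have "norm (ff' n x) = \<bar>1 / k - 1 / (k + x)\<bar>"
        by (simp add: ff'_def k_def abs_mult)
      also have "\<dots> = x / (k * (k + x))"
        using k x0 by (simp add: field_simps)
      also have "\<dots> \<le> (2*q) / (k * k)"
        using k x0 by (intro frac_le mult_mono) auto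
      finally show "norm (ff' n x) \<le> (2*q) * (1 / (real (Suc n))^2)"
        by (simp add: k_def power2_eq_square)
    qed
  qed
  have D: "((\<lambda>x. \<Sum>n. ff n x) has_field_derivative (\<Sum>n. ff' n q)) (at q)"
  proof (rule has_field_derivative_series'(2)[of S ff ff' q q])
    show "convex S" by (simp add: S_def)
    show "\<And>n x. x \<in> S \<Longrightarrow> (ff n has_field_derivative ff' n x) (at x within S)"
      using Spos ff_deriv by blast
    show "uniformly_convergent_on S (\<lambda>n x. \<Sum>i<n. ff' i x)" by (rule unif)
    show "q \<in> S" using q by (simp add: S_def)
    show "summable (\<lambda>n. ff n q)" using q by (rule ff_summable)
    show "q \<in> interior S" by (rule qS)
  qed
  have sff': "(\<Sum>n. ff' n q) = psi_tilde q + 1 / q - gamma0_tilde"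
    using P1 unfolding ff'_def by (rule sums_unique[symmetric])
  have D2: "((\<lambda>x. - ln x + gamma0_tilde * x + (\<Sum>n. ff n x)) has_field_derivative
      (- (1 / q) + gamma0_tilde * 1 + (\<Sum>n. ff' n q))) (at q)"
    using q by (intro derivative_intros D) (auto intro!: DERIV_ln_divide)
  have "((\<lambda>x. - ln x + gamma0_tilde * x + (\<Sum>n. ff n x)) has_field_derivative psi_tilde q) (at q)"
    using D2 unfolding sff' by simp
  then show "((\<lambda>x. ln (Gamma_tilde x)) has_real_derivative psi_tilde q) (at q)"
    by (rule has_field_derivative_transform_within_open[where S="{0<..}"])
       (use q ln_Gamma(2) in auto)
qed

end
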